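(* Let $\mathcal{M}$ and $\mathcal{M}'$ be MRTA instances with the same robots $R$ and tasks $T$, whose cost functions $c$ and $c'$ are injective on the edge set $E$ of the robot-task graph and differ only in the cost of a single edge $e$. Let $\textsc{Auction}(\mathcal{M})=(W=(w_k),a)$ and let $U=(u_k)$ denote the edges with second-best bids on $\textsc{Auction}(\mathcal{M})$. Then $\textsc{Assign}(\mathcal{M}')=\textsc{Assign}(\mathcal{M})$ if either (1) $e$ does not appear in $W$ and $c'(e)>\max_{k\in B_e}c(w_k)$; (2) $e=w_K\in W$ with $|B_e|=1$ and $c(u_K)>c'(e)\ge0$; or (3) $e=w_K\in W$ with $|B_e|>1$ and $c(u_K)>c'(e)>\max_{k\in B_e\setminus\{K\}}c(w_k)$.
   Context: $R$ (robots) and $T$ (tasks) are finite disjoint sets with $R\neq\emptyset$, $|R\sqcup T|\ge3$. The robot-task graph has vertex set $R\sqcup T$, edge set $E$ consisting of all 2-element subsets of $R\sqcup T$, and non-negative edge costs $c:E\to\mathbb{R}_+$; injective means distinct edges have distinct costs. $\textsc{Auction}(\mathcal{M})$: set $A=\emptyset$ and $a(r)=0$ for all $r\in R$. For $k=1,\dots,|T|$: let $w_k=\{s,t\}$ be the edge with $s\in R\cup A$, $t\in T\setminus A$ minimising $c(\{s,t\})$; set $a(t)=k$ and $A\leftarrow A\cup\{t\}$. Output $W=(w_1,\dots,w_{|T|})$ and $a:R\sqcup T\to\{0,\dots,|T|\}$. $\textsc{DFShortcut}$: the edges of $W$ form a forest each of whose components contains exactly one robot. For each robot $r$ let $V(r)$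 be the vertex set of its component; start with $P(r)=(r)$ and, while $P(r)$ does not contain all of $V(r)$, scan the vertices of $P(r)$ from last to first, and at the first vertex $t$ having a $W$-neighbour not yet in $P(r)$, append the such neighbour $s$ with smallest $a(s)$. Output the plan $\{P(r):r\in R\}$. $\textsc{Assign}(\mathcal{M})$ is the result of applying $\textsc{DFShortcut}$ to $\textsc{Auction}(\mathcal{M})$. For $e=\{x,y\}$, $B_e=\{k\in\mathbb{Z}:\min(a(x),a(y))<k\le\max(a(x),a(y))\}$. The edge with second-best bid in round $k$ is the edge $u_k\ne w_k$ with $k\in B_{u_k}$ such that $c(u_k)\le c(f)$ for all edges $f\ne w_k$ with $k\in B_f$. *)

theory Defs
  imports Complex_Main
begin

text \<open>Vertices of the robot-task graph live in a type 'v; robots R and tasks T are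
finite disjoint subsets. Edges are 2-element subsets; costs are functions on 'v set
(only their values on edges matter).\<close>

definition edges :: "'v set \<Rightarrow> 'v set set" where
  "edges V = {{x, y} | x y. x \<in> V \<and> y \<in> V \<and> x \<noteq> y}"

definition cand :: "'v set \<Rightarrow> 'v set \<Rightarrow> 'v set \<Rightarrow> 'v set set" where
  "cand R T A = {{s, t} | s t. s \<in> R \<union> A \<and> t \<in> T - A}"

text \<open>State after k rounds: list of winning edges and list of assigned tasks (in order).\<close>
primrec auction_st :: "('v set \<Rightarrow> real) \<Rightarrow> 'v set \<Rightarrow> 'v set \<Rightarrow> nat \<Rightarrow> 'v set list \<times> 'v list" where
  "auction_st c R T 0 = ([], [])"
| "auction_st c R T (Suc k) =
     (let W = fst (auction_st c R T k); L = snd (auction_st c R T k);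
          w = (ARG_MIN c f. f \<in> cand R T (set L));
          t = (THE t. t \<in> w \<and> t \<in> T - set L)
      in (W @ [w], L @ [t]))"

definition auction_W :: "('v set \<Rightarrow> real) \<Rightarrow> 'v set \<Rightarrow> 'v set \<Rightarrow> 'v set list" where
  "auction_W c R T = fst (auction_st c R T (card T))"

definition auction_a :: "('v set \<Rightarrow> real) \<Rightarrow> 'v set \<Rightarrow> 'v set \<Rightarrow> 'v \<Rightarrow> nat" where
  "auction_a c R T x =
     (let L = snd (auction_st c R T (card T))
      in if x \<in> set L then Suc (LEAST i. i < length L \<and> L ! i = x) else 0)"

text \<open>w_k for k = 1..|T|.\<close>
definition auction_w :: "('v set \<Rightarrow> real) \<Rightarrow> 'v set \<Rightarrow> 'v set \<Rightarrow> nat \<Rightarrow> 'v set" where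
  "auction_w c R T k = auction_W c R T ! (k - 1)"

definition bid_rounds :: "('v \<Rightarrow> nat) \<Rightarrow> 'v set \<Rightarrow> nat set" where
  "bid_rounds a e = {k. \<exists>x y. e = {x, y} \<and> min (a x) (a y) < k \<and> k \<le> max (a x) (a y)}"

definition second_best :: "('v set \<Rightarrow> real) \<Rightarrow> 'v set \<Rightarrow> 'v set \<Rightarrow> nat \<Rightarrow> 'v set" where
  "second_best c R T k =
     (ARG_MIN c f. f \<in> edges (R \<union> T) \<and> f \<noteq> auction_w c R T k
                   \<and> k \<in> bid_rounds (auction_a c R T) f)"

definition comp :: "'v set list \<Rightarrow> 'v \<Rightarrow> 'v set" where
  "comp W r = {v. (r, v) \<in> {(x, y). {x, y} \<in> set W}\<^sup>*}"

definition dfs_step :: "'v set list \<Rightarrow> ('v \<Rightarrow> nat) \<Rightarrow> 'v set \<Rightarrow> 'v list \<Rightarrow> 'v list" where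
  "dfs_step W a V P =
     (if V \<subseteq> set P then P
      else let cs = filter (\<lambda>t. \<exists>s. {t, s} \<in> set W \<and> s \<notin> set P) P
           in if cs = [] then P
              else let t = last cs
                   in P @ [ARG_MIN a s. {t, s} \<in> set W \<and> s \<notin> set P])"

definition dfs_path :: "'v set list \<Rightarrow> ('v \<Rightarrow> nat) \<Rightarrow> 'v \<Rightarrow> 'v list" where
  "dfs_path W a r = (dfs_step W a (comp W r) ^^ length W) [r]"

definition dfshortcut :: "'v set \<Rightarrow> 'v set list \<Rightarrow> ('v \<Rightarrow> nat) \<Rightarrow> 'v \<Rightarrow> 'v list" where
  "dfshortcut R W a = (\<lambda>r. if r \<in> R then dfs_path W a r else [])"

definition assign :: "('v set \<Rightarrow> real) \<Rightarrow> 'v set \<Rightarrow> 'v set \<Rightarrow> 'v \<Rightarrow> 'v list" where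
  "assign c R T = dfshortcut R (auction_W c R T) (auction_a c R T)"

end

theory Submission
  imports Defs
begin

lemma st_len: "length (fst (auction_st c R T k)) = k \<and> length (snd (auction_st c R T k)) = k"
  by (induction k) (simp_all add: Let_def)

lemma st_prefix: "k \<le> m \<Longrightarrow> auction_st c R T k =
   (take k (fst (auction_st c R T m)), take k (snd (auction_st c R T m)))"
proof (induction m)
  case 0 thus ?case by simp
next
  case (Suc m)
  show ?case
  proof (cases "k = Suc m")
    case True
    then show ?thesis using st_len[of c R T "Suc m"] by (metis prod.collapse take_all order_refl)
  next
    case False
    hence "k \<le> m" using Suc.prems by simp
    then show ?thesis using Suc.IH st_len[of c R T m] by (simp add: Let_def)
  qed
qed

lemma argmin_fin:
  fixes f :: "'a \<Rightarrow> real"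
  assumes "finite S" "S \<noteq> {}"
  shows "(ARG_MIN f x. x \<in> S) \<in> S \<and> (\<forall>y\<in>S. f (ARG_MIN f x. x \<in> S) \<le> f y)"
  using arg_min_if_finite[OF assms, of f] unfolding arg_min_on_def by force

lemma argmin_unique:
  fixes f :: "'a \<Rightarrow> real"
  assumes "finite S" "S \<subseteq> E" "inj_on f E" "w \<in> S" "\<forall>y\<in>S. f w \<le> f y"
  shows "(ARG_MIN f x. x \<in> S) = w"
proof -
  have ne: "S \<noteq> {}" using assms(4) by auto
  note m = argmin_fin[OF assms(1) ne, of f]
  have "f (ARG_MIN f x. x \<in> S) = f w" using m assms(4,5) by force
  then show ?thesis using m assms(2,3,4) by (meson inj_onD subsetD)
qed

lemma cand_sub:
  assumes "A \<subseteq> T" "R \<inter> T = {}"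
  shows "cand R T A \<subseteq> edges (R \<union> T)"
  using assms unfolding cand_def edges_def by blast

lemma edges_fin: "finite V \<Longrightarrow> finite (edges V)"
  by (rule finite_subset[of _ "Pow V"]) (auto simp: edges_def)

lemma step:
  fixes c :: "'v set \<Rightarrow> real"
  assumes fR: "finite R" and fT: "finite T" and disj: "R \<inter> T = {}" and Rne: "R \<noteq> {}"
    and "distinct L" "set L \<subseteq> T" "length L < card T"
  defines "w \<equiv> ARG_MIN c f. f \<in> cand R T (set L)"
  shows "w \<in> cand R T (set L) \<and> (\<forall>f\<in>cand R T (set L). c w \<le> c f)
     \<and> (THE t. t \<in> w \<and> t \<in> T - set L) \<in> T - set L
     \<and> (\<exists>s. s \<in> R \<union> set L \<and> w = {s, THE t. t \<in> w \<and> t \<in> T - set L})"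
proof -
  have fin: "finite (cand R T (set L))"
    using cand_sub[OF assms(6) disj] edges_fin[of "R \<union> T"] fR fT finite_subset by blast
  have "card (set L) < card T" using assms(5,7) by (simp add: distinct_card)
  hence "T - set L \<noteq> {}" using assms(6) by (metis Diff_eq_empty_iff less_irrefl subset_antisym)
  then obtain t0 where t0: "t0 \<in> T - set L" by blast
  obtain r where r: "r \<in> R" using Rne by blast
  have "{r, t0} \<in> cand R T (set L)" using r t0 unfolding cand_def by blast
  hence ne: "cand R T (set L) \<noteq> {}" by blast
  note m = argmin_fin[OF fin ne, of c, folded w_def]
  then obtain s t where st: "w = {s,t}" "s \<in> R \<union> set L" "t \<in> T - set L"
    unfolding cand_def by blast
  have "(THE t. t \<in> w \<and> t \<in> T - set L) = t"
    apply (rule the_equality)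
    using st disj by auto
  then show ?thesis using m st by auto
qed

theorem corollary8:
  fixes R T :: "'v set" and c c' :: "'v set \<Rightarrow> real" and e :: "'v set"
  assumes "finite R" and "finite T" and "R \<inter> T = {}" and "R \<noteq> {}"
    and "card (R \<union> T) \<ge> 3"
    and "\<forall>f\<in>edges (R \<union> T). 0 \<le> c f" and "\<forall>f\<in>edges (R \<union> T). 0 \<le> c' f"
    and "inj_on c (edges (R \<union> T))" and "inj_on c' (edges (R \<union> T))"
    and "e \<in> edges (R \<union> T)"
    and "\<forall>f\<in>edges (R \<union> T). f \<noteq> e \<longrightarrow> c' f = c f"
    and "(e \<notin> set (auction_W c R T) \<and>
          (\<forall>k\<in>bid_rounds (auction_a c R T) e. c (auction_w c R T k) < c' e))
       \<or> (\<exists>K\<in>{1..card T}. e = auction_w c R T K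
            \<and> card (bid_rounds (auction_a c R T) e) = 1
            \<and> c' e < c (second_best c R T K) \<and> 0 \<le> c' e)
       \<or> (\<exists>K\<in>{1..card T}. e = auction_w c R T K
            \<and> card (bid_rounds (auction_a c R T) e) > 1
            \<and> c' e < c (second_best c R T K)
            \<and> (\<forall>k\<in>bid_rounds (auction_a c R T) e - {K}. c (auction_w c R T k) < c' e))"
  shows "assign c' R T = assign c R T"
proof -
  note fR = assms(1) and fT = assms(2) and disj = assms(3) and Rne = assms(4)
  define n where "n = card T"
  define Lf where "Lf = snd (auction_st c R T n)"
  define Wf where "Wf = fst (auction_st c R T n)"
  define a where "a = auction_a c R T"
  define cd where "cd = (\<lambda>i. cand R T (set (take i Lf)))"
  have inv: "k \<le> n \<Longrightarrow> distinct (snd (auction_st c R T k)) \<and> set (snd (auction_st c R T k)) \<subseteq> T" for k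
  proof (induction k)
    case 0 then show ?case by simp
  next
    case (Suc k)
    hence IH: "distinct (snd (auction_st c R T k))" "set (snd (auction_st c R T k)) \<subseteq> T" by auto
    have "length (snd (auction_st c R T k)) < card T" using st_len[of c R T k] Suc.prems n_def by simp
    note S = step[OF fR fT disj Rne IH this, of c]
    show ?case using S IH by (auto simp: Let_def)
  qed
  have lenL: "length Lf = n" "length Wf = n" using st_len[of c R T n] Lf_def Wf_def by auto
  have distL: "distinct Lf" and subL: "set Lf \<subseteq> T" using inv[of n] Lf_def by auto
  have setL: "set Lf = T"
    using distL subL lenL fT n_def by (metis card_subset_eq distinct_card)
  have pre: "k \<le> n \<Longrightarrow> auction_st c R T k = (take k Wf, take k Lf)" for k
    using st_prefix[of k n c R T] Wf_def Lf_def by simp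
  have stepi: "Wf ! i \<in> cd i \<and> (\<forall>f\<in>cd i. c (Wf ! i) \<le> c f) \<and> Lf ! i \<in> T - set (take i Lf)
     \<and> (\<exists>s. s \<in> R \<union> set (take i Lf) \<and> Wf ! i = {s, Lf ! i})
     \<and> Wf ! i = (ARG_MIN c f. f \<in> cd i)" if "i < n" for i
  proof -
    have d: "distinct (take i Lf)" "set (take i Lf) \<subseteq> T" "length (take i Lf) < card T"
      using distL subL lenL that n_def set_take_subset[of i Lf] by (auto)
    note S = step[OF fR fT disj Rne d, of c]
    have e1: "auction_st c R T (Suc i) = (take (Suc i) Wf, take (Suc i) Lf)" using pre[of "Suc i"] that by (simp del: auction_st.simps)
    have e0: "auction_st c R T i = (take i Wf, take i Lf)" using pre[of i] that by (simp del: auction_st.simps)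
    have "take (Suc i) Wf = take i Wf @ [ARG_MIN c f. f \<in> cand R T (set (take i Lf))]"
      "take (Suc i) Lf = take i Lf @ [THE t. t \<in> (ARG_MIN c f. f \<in> cand R T (set (take i Lf))) \<and> t \<in> T - set (take i Lf)]"
      using e1 e0 by (auto simp: Let_def)
    hence "Wf ! i = (ARG_MIN c f. f \<in> cand R T (set (take i Lf)))"
       "Lf ! i = (THE t. t \<in> (ARG_MIN c f. f \<in> cand R T (set (take i Lf))) \<and> t \<in> T - set (take i Lf))"
      using lenL that by (metis nth_append_length length_take min.absorb4 take_Suc_conv_app_nth)+
    then show ?thesis using S cd_def by simp
  qed
  have aR: "x \<in> R \<Longrightarrow> a x = 0" for x
    using setL disj unfolding a_def auction_a_def Lf_def n_def by (auto simp: Let_def)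
  have aL: "j < n \<Longrightarrow> a (Lf ! j) = Suc j" for j
  proof -
    assume j: "j < n"
    have "(LEAST i. i < length Lf \<and> Lf ! i = Lf ! j) = j"
      apply (rule Least_equality)
      using j lenL distL nth_eq_iff_index_eq by fastforce+
    then show ?thesis using j lenL unfolding a_def auction_a_def Lf_def[symmetric] n_def[symmetric]
      by (simp add: Let_def)
  qed
  have candB: "Suc i \<in> bid_rounds a f" if hyp: "i < n" "f \<in> cd i" for i f
  proof -
    obtain s t where st: "f = {s,t}" "s \<in> R \<union> set (take i Lf)" "t \<in> T - set (take i Lf)"
      using hyp(2) unfolding cd_def cand_def by blast
    have as: "a s \<le> i"
    proof (cases "s \<in> R")
      case True then show ?thesis using aR by simp
    next
      case False
      then have "s \<in> set (take i Lf)" using st by simp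
      then obtain j where "j < i" "s = Lf ! j" using hyp(1) lenL
        by (auto simp: in_set_conv_nth)
      then show ?thesis using aL hyp(1) by simp
    qed
    obtain j where j: "j < n" "t = Lf ! j" using st setL lenL by (metis DiffD1 in_set_conv_nth)
    have "\<not> j < i" using j st hyp(1) lenL
      by (metis DiffD2 in_set_conv_nth length_take min.absorb4 nth_take)
    hence at: "Suc i \<le> a t" using aL j by simp
    show ?thesis unfolding bid_rounds_def using st(1) as at by force
  qed
  have Wdist: "i < n \<Longrightarrow> j < n \<Longrightarrow> Wf ! i = Wf ! j \<Longrightarrow> i = j" for i j
  proof (rule ccontr)
    have gen: "\<And>i j. i < n \<Longrightarrow> j < i \<Longrightarrow> Wf ! i \<noteq> Wf ! j"
    proof
      fix i j assume ij: "i < n" "j < i" "Wf ! i = Wf ! j"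
      have jn: "j < n" using ij by simp
      obtain s where s: "s \<in> R \<union> set (take j Lf)" "Wf ! j = {s, Lf ! j}" using stepi[OF jn] by blast
      have li: "Lf ! i \<in> Wf ! i" "Lf ! i \<in> T - set (take i Lf)" using stepi[of i] ij by auto
      have "Lf ! i \<noteq> Lf ! j" using distL ij lenL nth_eq_iff_index_eq by fastforce
      hence "Lf ! i = s" using li ij s by auto
      moreover have "set (take j Lf) \<subseteq> set (take i Lf)" using ij
        by (metis less_imp_le_nat set_take_subset_set_take)
      ultimately show False using s li disj by auto
    qed
    assume "i < n" "j < n" "Wf ! i = Wf ! j" "i \<noteq> j"
    then show False using gen by (metis linorder_neqE_nat)
  qed
  have cdsub: "i < n \<Longrightarrow> cd i \<subseteq> edges (R \<union> T)" for i
    using cand_sub[OF _ disj] subL set_take_subset cd_def by (metis order_trans)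
  have cdfin: "i < n \<Longrightarrow> finite (cd i)" for i
    using cdsub edges_fin[of "R \<union> T"] fR fT finite_subset by blast
  have wK: "auction_w c R T k = Wf ! (k - 1)" for k
    unfolding auction_w_def auction_W_def Wf_def n_def by simp
  have ce: "f \<in> edges (R \<union> T) \<Longrightarrow> f \<noteq> e \<Longrightarrow> c' f = c f" for f using assms(11) by blast
  have key: "(ARG_MIN c' f. f \<in> cd i) = (ARG_MIN c f. f \<in> cd i)" if i: "i < n" for i
  proof -
    let ?w = "Wf ! i"
    have wi: "?w \<in> cd i" "\<forall>f\<in>cd i. c ?w \<le> c f" "?w = (ARG_MIN c f. f \<in> cd i)" using stepi[OF i] by auto
    have "\<forall>f\<in>cd i. c' ?w \<le> c' f"
    proof
      fix f assume f: "f \<in> cd i"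
      have fE: "f \<in> edges (R \<union> T)" and wE: "?w \<in> edges (R \<union> T)" using f wi cdsub i by auto
      have cwf: "c ?w \<le> c f" using wi f by auto
      consider (A) "e \<notin> set Wf \<and> (\<forall>k\<in>bid_rounds a e. c (auction_w c R T k) < c' e)"
        | (B) K where "K \<in> {1..n}" "e = auction_w c R T K" "c' e < c (second_best c R T K)"
           "(card (bid_rounds a e) = 1 \<or> (\<forall>k\<in>bid_rounds a e - {K}. c (auction_w c R T k) < c' e))"
        using assms(12) unfolding a_def n_def auction_W_def[symmetric] Wf_def[symmetric]
        by (auto simp: Wf_def n_def auction_W_def)
      then show "c' ?w \<le> c' f"
      proof cases
        case A
        have "?w \<noteq> e" using A i lenL by (metis nth_mem)
        hence cw: "c' ?w = c ?w" using ce wE by blast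
        show ?thesis
        proof (cases "f = e")
          case True
          hence "Suc i \<in> bid_rounds a e" using candB i f by blast
          hence "c (auction_w c R T (Suc i)) < c' e" using A by blast
          then show ?thesis using cw True wK by simp
        next
          case False then show ?thesis using cw ce fE cwf by simp
        qed
      next
        case B
        define j where "j = K - 1"
        have j: "j < n" "Suc j = K" using B(1) j_def by auto
        have eW: "e = Wf ! j" using B(2) wK j_def by simp
        have Kin: "K \<in> bid_rounds a e" using candB[OF j(1)] stepi[OF j(1)] eW j by auto
        show ?thesis
        proof (cases "i = j")
          case True
          show ?thesis
          proof (cases "f = e")
            case True2: True
            then show ?thesis using True eW by simp
          next
            case False
            let ?S = "{f. f \<in> edges (R \<union> T) \<and> f \<noteq> auction_w c R T K \<and> K \<in> bid_rounds (auction_a c R T) f}"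
            have fS: "f \<in> ?S" using fE False B(2) candB[OF i f] True j a_def by auto
            have "finite ?S" using edges_fin[of "R \<union> T"] fR fT by (auto intro: finite_subset)
            hence "c (second_best c R T K) \<le> c f"
              using argmin_fin[of ?S c] fS unfolding second_best_def by auto
            then show ?thesis using B(3) True eW ce fE False by simp
          qed
        next
          case False
          have "?w \<noteq> e" using eW Wdist False i j by blast
          hence cw: "c' ?w = c ?w" using ce wE by blast
          show ?thesis
          proof (cases "f = e")
            case True
            hence si: "Suc i \<in> bid_rounds a e" using candB i f by blast
            have "Suc i \<noteq> K" using False j by simp
            have "card (bid_rounds a e) \<noteq> 1"
            proof
              assume "card (bid_rounds a e) = 1"
              then obtain x where "bid_rounds a e = {x}" using card_1_singletonE by blast
              then show False using si Kin \<open>Suc i \<noteq> K\<close> by auto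
            qed
            hence "c (auction_w c R T (Suc i)) < c' e" using B(4) si \<open>Suc i \<noteq> K\<close> by blast
            then show ?thesis using cw True wK by simp
          next
            case False then show ?thesis using cw ce fE cwf by simp
          qed
        qed
      qed
    qed
    then show ?thesis using argmin_unique[OF cdfin[OF i] cdsub[OF i] assms(9) wi(1)] wi(3) by simp
  qed
  have runs: "k \<le> n \<Longrightarrow> auction_st c' R T k = auction_st c R T k" for k
  proof (induction k)
    case 0 then show ?case by simp
  next
    case (Suc k)
    have "snd (auction_st c R T k) = take k Lf" using pre Suc.prems by simp
    moreover have "(ARG_MIN c' f. f \<in> cd k) = (ARG_MIN c f. f \<in> cd k)" using key Suc.prems by simp
    ultimately show ?case using Suc by (simp add: Let_def cd_def)
  qed
  have "auction_st c' R T n = auction_st c R T n" using runs by simp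
  hence "auction_W c' R T = auction_W c R T" "auction_a c' R T = auction_a c R T"
    unfolding auction_W_def auction_a_def n_def by (auto intro!: ext)
  then show ?thesis unfolding assign_def by simp
qed

end
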